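(* (a) For all $x\ge0$: $x^2=-\frac16[\sigma(x+2)-4\sigma(x+1)+3\sigma(x)-4]$ and $x=-\frac1{12}[\sigma(x+3)-5\sigma(x+2)+7\sigma(x+1)-3\sigma(x)+6]$, and for all $x,y\ge0$: $xy=-\frac1{12}[\sigma(x+y+2)-4\sigma(x+y+1)+3\sigma(x+y)-\sigma(x+2)+4\sigma(x+1)-3\sigma(x)-\sigma(y+2)+4\sigma(y+1)-3\sigma(y)+4]$, where $\sigma=\mathrm{ReLU}^3$. (b) Consequently, for every $\ell\in\mathbb N_+$ and $\mathbf i\in I^d$, the restriction of the multivariate B-spline $N^{(4)}_{\ell,\mathbf i}$ to $[0,1]^d$ is implemented exactly by a network with activations in $\{\mathrm{ReLU}^3\}$ of depth $\lceil\log_2 d\rceil+2$ and width at most $11d$.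
   Context: $\mathrm{ReLU}^3(x)=(\max\{x,0\})^3$. B-splines of order $k=4$: knots $t_{-3}=\dots=t_0=0$, $t_i=i/\ell$ ($0\le i\le\ell$), $t_\ell=\dots=t_{\ell+3}=1$; for $i\in I=\{-3,\dots,\ell-1\}$, $N^{(4)}_{\ell,i}(x)=(t_{i+4}-t_i)[t_i,\dots,t_{i+4}](x-t)_+^{3}$ (divided difference in $t$), $x\in[0,1]$, continuously modified at $x=1$; these are nonnegative $C^2$ piecewise cubics, each a linear combination of $(x-j/\ell)_+^3$ ($0\le j\le\ell$), $x^2$, $x$ and $1$ on $[0,1]$. Multivariate: $N^{(4)}_{\ell,\mathbf i}(\mathbf x)=\prod_{j=1}^dN^{(4)}_{\ell,i_j}(x_j)$. A network of depth $\mathcal D$, width $\mathcal W$, activations in $\Phi$ computes $f_0=x$, $(f_\ell)_i=\rho^{(\ell)}_i((A_\ell f_{\ell-1}+b_\ell)_i)$ for $\ell=1,\dots,\mathcal D-1$ ($\rho^{(\ell)}_i\in\Phi$), output $A_{\mathcal D}f_{\mathcal D-1}+b_{\mathcal D}$, with all layer sizes $\le\mathcal W$. *)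

theory Defs
  imports "HOL-Analysis.Analysis"
begin

definition relu3 :: "real \<Rightarrow> real" where
  "relu3 x = (max x 0) ^ 3"

text \<open>ddiv f t i k is the divided difference [t_i, ..., t_(i+k)] f.
  For a nondecreasing knot sequence t, if t_(i+k) = t_i all nodes coincide
  and the divided difference is the k-th derivative divided by k factorial.\<close>

fun ddiv :: "(real \<Rightarrow> real) \<Rightarrow> (int \<Rightarrow> real) \<Rightarrow> int \<Rightarrow> nat \<Rightarrow> real" where
  "ddiv f t i 0 = f (t i)"
| "ddiv f t i (Suc k) =
     (if t (i + int (Suc k)) = t i
      then (deriv ^^ Suc k) f (t i) / fact (Suc k)
      else (ddiv f t (i + 1) k - ddiv f t i k) / (t (i + int (Suc k)) - t i))"

definition knot :: "nat \<Rightarrow> int \<Rightarrow> real" where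
  "knot l j = (if j \<le> 0 then 0 else if j \<ge> int l then 1 else real_of_int j / real l)"

definition bspline4_raw :: "nat \<Rightarrow> int \<Rightarrow> real \<Rightarrow> real" where
  "bspline4_raw l i x =
     (knot l (i + 4) - knot l i) * ddiv (\<lambda>t. (max (x - t) 0) ^ 3) (knot l) i 4"

definition bspline4 :: "nat \<Rightarrow> int \<Rightarrow> real \<Rightarrow> real" where
  "bspline4 l i x =
     (if 0 < x \<and> x < 1 then bspline4_raw l i x
      else Lim (at x within {0<..<1}) (bspline4_raw l i))"

definition bspline_index :: "nat \<Rightarrow> int set" where
  "bspline_index l = {-3 .. int l - 1}"

text \<open>Multivariate tensor-product B-spline; points and multi-indices are lists of length d.\<close>

definition bspline4_multi :: "nat \<Rightarrow> int list \<Rightarrow> real list \<Rightarrow> real" where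
  "bspline4_multi l is x = (\<Prod>j<length is. bspline4 l (is ! j) (x ! j))"

definition unit_cube :: "nat \<Rightarrow> real list set" where
  "unit_cube d = {x. length x = d \<and> (\<forall>j<d. 0 \<le> x ! j \<and> x ! j \<le> 1)}"

text \<open>Affine map v \<mapsto> A v + b, matrices as lists of rows.\<close>

definition affine :: "real list list \<Rightarrow> real list \<Rightarrow> real list \<Rightarrow> real list" where
  "affine A b v = map (\<lambda>k. sum_list (map2 (*) (A ! k) v) + b ! k) [0..<length A]"

type_synonym hidden_layer = "real list list \<times> real list \<times> (real \<Rightarrow> real) list"

fun eval_hidden :: "hidden_layer list \<Rightarrow> real list \<Rightarrow> real list" where
  "eval_hidden [] v = v"
| "eval_hidden ((A, b, \<rho>) # ls) v = eval_hidden ls (map2 (\<lambda>r z. r z) \<rho> (affine A b v))"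

fun wf_hidden :: "(real \<Rightarrow> real) set \<Rightarrow> nat \<Rightarrow> nat \<Rightarrow> hidden_layer list \<Rightarrow> nat \<Rightarrow> bool" where
  "wf_hidden \<Phi> W n [] m = (m = n)"
| "wf_hidden \<Phi> W n ((A, b, \<rho>) # ls) m =
     (length A \<le> W \<and> length b = length A \<and> length \<rho> = length A \<and> set \<rho> \<subseteq> \<Phi> \<and>
      (\<forall>r\<in>set A. length r = n) \<and> wf_hidden \<Phi> W (length A) ls m)"

text \<open>F restricted to S (a set of inputs of length d) is implemented exactly by a
  scalar-output network of depth D (D affine maps, D - 1 hidden layers), width at most W
  (all layer sizes, including input and output, at most W), activations in Phi.\<close>

definition implements_on ::
  "(real \<Rightarrow> real) set \<Rightarrow> nat \<Rightarrow> nat \<Rightarrow> nat \<Rightarrow> real list set \<Rightarrow> (real list \<Rightarrow> real) \<Rightarrow> bool" where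
  "implements_on \<Phi> D W d S F \<longleftrightarrow>
     (\<exists>hs Aout bout m.
        length hs + 1 = D \<and> d \<le> W \<and> 1 \<le> W \<and>
        wf_hidden \<Phi> W d hs m \<and>
        length Aout = 1 \<and> length bout = 1 \<and> (\<forall>r\<in>set Aout. length r = m) \<and>
        (\<forall>x\<in>S. affine Aout bout (eval_hidden hs x) = [F x]))"

end

theory Submission
  imports Defs
begin

lemma relu3_nonneg: "z \<ge> 0 \<Longrightarrow> relu3 z = z ^ 3"
  by (simp add: relu3_def max_def)

lemma relu3_odd: "relu3 w - relu3 (- w) = w ^ 3"
  by (cases "w \<ge> 0") (auto simp: relu3_def max_def)

lemma id_sq: "(x::real) \<ge> 0 \<Longrightarrow> x ^ 2 = - (1/6) * (relu3 (x + 2) - 4 * relu3 (x + 1) + 3 * relu3 x - 4)"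
  by (simp add: relu3_nonneg algebra_simps power2_eq_square power3_eq_cube)

lemma id_lin: "(x::real) \<ge> 0 \<Longrightarrow> x = - (1/12) * (relu3 (x + 3) - 5 * relu3 (x + 2) + 7 * relu3 (x + 1)
                            - 3 * relu3 x + 6)"
  by (simp add: relu3_nonneg algebra_simps power2_eq_square power3_eq_cube)

lemma id_prod: "(x::real) \<ge> 0 \<Longrightarrow> y \<ge> 0 \<Longrightarrow>
            x * y = - (1/12) * (relu3 (x + y + 2) - 4 * relu3 (x + y + 1) + 3 * relu3 (x + y)
                                - relu3 (x + 2) + 4 * relu3 (x + 1) - 3 * relu3 x
                                - relu3 (y + 2) + 4 * relu3 (y + 1) - 3 * relu3 y + 4)"
  by (simp add: relu3_nonneg algebra_simps power2_eq_square power3_eq_cube)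

lemma prod_id: "(a::real) * b = (1/24) * ((relu3 (a+b+1) - relu3 (-(a+b+1))) - (relu3 (a+b-1) - relu3 (-(a+b-1)))
   - (relu3 (a-b+1) - relu3 (-(a-b+1))) + (relu3 (a-b-1) - relu3 (-(a-b-1))))"
  by (simp only: relu3_odd) (simp add: algebra_simps power3_eq_cube)

lemma lin_id: "(a::real) = (1/6) * ((relu3 (a+1) - relu3 (-(a+1))) + (relu3 (a-1) - relu3 (-(a-1)))
   - 2 * (relu3 a - relu3 (-a)))"
  by (simp only: relu3_odd) (simp add: algebra_simps power3_eq_cube)


lemma eval_hidden_append:
  "eval_hidden (hs @ [(A, b, \<rho>)]) v = map2 (\<lambda>r z. r z) \<rho> (affine A b (eval_hidden hs v))"
  by (induction hs arbitrary: v) auto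

lemma wf_hidden_append:
  "wf_hidden \<Phi> W n hs m \<Longrightarrow> length A \<le> W \<Longrightarrow> length b = length A \<Longrightarrow> length \<rho> = length A \<Longrightarrow>
   set \<rho> \<subseteq> \<Phi> \<Longrightarrow> (\<forall>r\<in>set A. length r = m) \<Longrightarrow> wf_hidden \<Phi> W n (hs @ [(A, b, \<rho>)]) (length A)"
  by (induction \<Phi> W n hs m rule: wf_hidden.induct) auto

lemma sum_list_map2:
  "length a = length h \<Longrightarrow> sum_list (map2 (*) a h) = (\<Sum>i<length a. a ! i * h ! i)"
  by (simp add: sum_list_sum_nth atLeast0LessThan)

definition aff :: "real list set \<Rightarrow> (real list \<Rightarrow> real) list \<Rightarrow> (real list \<Rightarrow> real) \<Rightarrow> bool" where
  "aff S L f \<longleftrightarrow> (\<exists>a c. length a = length L \<and> (\<forall>x\<in>S. f x = (\<Sum>i<length L. a ! i * (L ! i) x) + c))"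

definition realizes :: "nat \<Rightarrow> nat \<Rightarrow> real list set \<Rightarrow> nat \<Rightarrow> (real list \<Rightarrow> real) list \<Rightarrow> bool" where
  "realizes W n S k L \<longleftrightarrow> (\<exists>hs. length hs = k \<and> wf_hidden {relu3} W n hs (length L) \<and>
      (\<forall>x\<in>S. eval_hidden hs x = map (\<lambda>h. h x) L))"

lemma aff_const: "aff S L (\<lambda>x. c)"
  unfolding aff_def by (rule exI[of _ "replicate (length L) 0"], rule exI[of _ c]) simp

lemma aff_mem: assumes "u \<in> set L" shows "aff S L u"
proof -
  obtain p where p: "p < length L" "L ! p = u" using assms by (auto simp: in_set_conv_nth)
  define a where "a = map (\<lambda>i. if i = p then 1 else (0::real)) [0..<length L]"
  have "\<forall>x. (\<Sum>i<length L. a ! i * (L ! i) x) = u x"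
  proof
    fix x
    have "(\<Sum>i<length L. a ! i * (L ! i) x) = (\<Sum>i<length L. if i = p then (L ! i) x else 0)"
      by (rule sum.cong) (auto simp: a_def)
    also have "\<dots> = u x" using p by simp
    finally show "(\<Sum>i<length L. a ! i * (L ! i) x) = u x" .
  qed
  then show ?thesis unfolding aff_def
    by (intro exI[of _ a] exI[of _ 0]) (simp add: a_def)
qed

lemma aff_add: assumes "aff S L f" "aff S L g" shows "aff S L (\<lambda>x. f x + g x)"
proof -
  obtain a c where a: "length a = length L" "\<forall>x\<in>S. f x = (\<Sum>i<length L. a ! i * (L ! i) x) + c"
    using assms(1) unfolding aff_def by blast
  obtain a' c' where a': "length a' = length L" "\<forall>x\<in>S. g x = (\<Sum>i<length L. a' ! i * (L ! i) x) + c'"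
    using assms(2) unfolding aff_def by blast
  show ?thesis unfolding aff_def
    apply (rule exI[of _ "map2 (+) a a'"], rule exI[of _ "c + c'"])
    using a a' by (auto simp: sum.distrib[symmetric] algebra_simps intro!: sum.cong)
qed

lemma aff_mult: assumes "aff S L f" shows "aff S L (\<lambda>x. k * f x)"
proof -
  obtain a c where a: "length a = length L" "\<forall>x\<in>S. f x = (\<Sum>i<length L. a ! i * (L ! i) x) + c"
    using assms(1) unfolding aff_def by blast
  show ?thesis unfolding aff_def
    apply (rule exI[of _ "map (\<lambda>z. k * z) a"], rule exI[of _ "k * c"])
    using a by (auto simp: sum_distrib_left algebra_simps intro!: sum.cong)
qed

lemma aff_cong: "aff S L f \<Longrightarrow> (\<forall>x\<in>S. f x = g x) \<Longrightarrow> aff S L g"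
  unfolding aff_def by auto

lemma aff_sum: "(\<forall>m\<in>A. aff S L (f m)) \<Longrightarrow> aff S L (\<lambda>x. \<Sum>m\<in>A. f m x)"
proof (induction A rule: infinite_finite_induct)
  case (infinite A) then show ?case by (simp add: aff_const)
next
  case empty then show ?case by (simp add: aff_const)
next
  case (insert a A) then show ?case by (simp add: aff_add)
qed

lemma aff_mono: assumes "set L \<subseteq> set L'" "aff S L f" shows "aff S L' f"
proof -
  obtain a c where a: "length a = length L" "\<forall>x\<in>S. f x = (\<Sum>i<length L. a ! i * (L ! i) x) + c"
    using assms(2) unfolding aff_def by blast
  have "aff S L' (\<lambda>x. (\<Sum>i<length L. a ! i * (L ! i) x) + c)"
    using assms(1) by (intro aff_add aff_sum aff_const ballI aff_mult aff_mem) auto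
  then show ?thesis using a by (auto intro: aff_cong)
qed

lemma aff_diff: "aff S L f \<Longrightarrow> aff S L g \<Longrightarrow> aff S L (\<lambda>x. f x - g x)"
  using aff_add[of S L f "\<lambda>x. (-1) * g x"] aff_mult[of S L g "-1"] by simp

lemma realizes_base: "realizes W d (unit_cube d) 0 (map (\<lambda>j x. x ! j) [0..<d])"
  unfolding realizes_def unit_cube_def
  by (rule exI[of _ "[]"]) (auto intro!: nth_equalityI)

lemma realizes_step:
  assumes R: "realizes W n S k L" and len: "length U \<le> W"
    and U: "\<forall>u\<in>set U. \<exists>g. aff S L g \<and> (\<forall>x\<in>S. u x = relu3 (g x))"
  shows "realizes W n S (Suc k) U"
proof -
  obtain hs where hs: "length hs = k" "wf_hidden {relu3} W n hs (length L)"
    "\<forall>x\<in>S. eval_hidden hs x = map (\<lambda>h. h x) L"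
    using R unfolding realizes_def by blast
  have "\<forall>p. \<exists>ac. p < length U \<longrightarrow> length (fst ac) = length L \<and>
      (\<forall>x\<in>S. (U ! p) x = relu3 ((\<Sum>i<length L. fst ac ! i * (L ! i) x) + snd ac))"
  proof
    fix p
    show "\<exists>ac. p < length U \<longrightarrow> length (fst ac) = length L \<and>
      (\<forall>x\<in>S. (U ! p) x = relu3 ((\<Sum>i<length L. fst ac ! i * (L ! i) x) + snd ac))"
    proof (cases "p < length U")
      case True
      then obtain g where g: "aff S L g" "\<forall>x\<in>S. (U ! p) x = relu3 (g x)" using U nth_mem by blast
      then obtain a c where "length a = length L" "\<forall>x\<in>S. g x = (\<Sum>i<length L. a ! i * (L ! i) x) + c"
        unfolding aff_def by blast
      then show ?thesis using g by (intro exI[of _ "(a, c)"]) auto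
    qed auto
  qed
  then obtain F where F: "\<And>p. p < length U \<Longrightarrow> length (fst (F p)) = length L \<and>
      (\<forall>x\<in>S. (U ! p) x = relu3 ((\<Sum>i<length L. fst (F p) ! i * (L ! i) x) + snd (F p)))"
    by metis
  define A where "A = map (\<lambda>p. fst (F p)) [0..<length U]"
  define b where "b = map (\<lambda>p. snd (F p)) [0..<length U]"
  define \<rho> where "\<rho> = replicate (length U) relu3"
  have wf: "wf_hidden {relu3} W n (hs @ [(A, b, \<rho>)]) (length U)"
    using wf_hidden_append[OF hs(2), of A b \<rho>] len F by (auto simp: A_def b_def \<rho>_def set_replicate_conv_if)
  have ev: "eval_hidden (hs @ [(A, b, \<rho>)]) x = map (\<lambda>h. h x) U" if x: "x \<in> S" for x
  proof -
    have "eval_hidden (hs @ [(A, b, \<rho>)]) x = map2 (\<lambda>r z. r z) \<rho> (affine A b (map (\<lambda>h. h x) L))"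
      using hs(3) x by (simp add: eval_hidden_append)
    also have "\<dots> = map (\<lambda>h. h x) U"
    proof (rule nth_equalityI)
      fix p assume "p < length (map2 (\<lambda>r z. r z) \<rho> (affine A b (map (\<lambda>h. h x) L)))"
      then have p: "p < length U" by (simp add: \<rho>_def affine_def A_def)
      have "map2 (\<lambda>r z. r z) \<rho> (affine A b (map (\<lambda>h. h x) L)) ! p =
            relu3 (sum_list (map2 (*) (fst (F p)) (map (\<lambda>h. h x) L)) + snd (F p))"
        using p by (simp add: \<rho>_def affine_def A_def b_def)
      also have "\<dots> = (U ! p) x"
        using F[OF p] x by (simp add: sum_list_map2)
      finally show "map2 (\<lambda>r z. r z) \<rho> (affine A b (map (\<lambda>h. h x) L)) ! p = map (\<lambda>h. h x) U ! p"
        using p by simp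
    qed (simp add: \<rho>_def affine_def A_def)
    finally show ?thesis .
  qed
  show ?thesis unfolding realizes_def
    using wf ev hs(1) by (intro exI[of _ "hs @ [(A, b, \<rho>)]"]) auto
qed

lemma realizes_final:
  assumes R: "realizes W n S k L" and F: "aff S L F" and "n \<le> W" "1 \<le> W"
  shows "implements_on {relu3} (Suc k) W n S F"
proof -
  obtain hs where hs: "length hs = k" "wf_hidden {relu3} W n hs (length L)"
    "\<forall>x\<in>S. eval_hidden hs x = map (\<lambda>h. h x) L"
    using R unfolding realizes_def by blast
  obtain a c where a: "length a = length L" "\<forall>x\<in>S. F x = (\<Sum>i<length L. a ! i * (L ! i) x) + c"
    using F unfolding aff_def by blast
  show ?thesis unfolding implements_on_def
    apply (rule exI[of _ hs], rule exI[of _ "[a]"], rule exI[of _ "[c]"], rule exI[of _ "length L"])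
    using hs a assms by (auto simp: affine_def sum_list_map2)
qed


definition cu :: "(real list \<Rightarrow> real) \<Rightarrow> (real list \<Rightarrow> real) list" where
  "cu g = [\<lambda>x. relu3 (g x), \<lambda>x. relu3 (- g x)]"

fun units :: "(real list \<Rightarrow> real) list \<Rightarrow> (real list \<Rightarrow> real) list" where
  "units [] = []"
| "units [a] = cu (\<lambda>x. a x + 1) @ cu (\<lambda>x. a x - 1) @ cu a"
| "units (a # b # r) = cu (\<lambda>x. a x + b x + 1) @ cu (\<lambda>x. a x + b x - 1) @
     cu (\<lambda>x. a x - b x + 1) @ cu (\<lambda>x. a x - b x - 1) @ units r"

fun pairprod :: "(real list \<Rightarrow> real) list \<Rightarrow> (real list \<Rightarrow> real) list" where
  "pairprod [] = []"
| "pairprod [a] = [a]"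
| "pairprod (a # b # r) = (\<lambda>x. a x * b x) # pairprod r"

lemma units_len: "length (units V) \<le> 6 * length V"
  by (induction V rule: units.induct) (auto simp: cu_def)

lemma pairprod_len: "length (pairprod V) = (length V + 1) div 2"
  by (induction V rule: pairprod.induct) auto

lemma pairprod_ne: "V \<noteq> [] \<Longrightarrow> pairprod V \<noteq> []"
  by (induction V rule: pairprod.induct) auto

lemma pairprod_prod: "prod_list (map (\<lambda>w. w x) (pairprod V)) = prod_list (map (\<lambda>v. v x) V)"
  by (induction V rule: pairprod.induct) auto

lemma cu_ok: "aff S L g \<Longrightarrow> \<forall>u\<in>set (cu g). \<exists>g'. aff S L g' \<and> (\<forall>x\<in>S. u x = relu3 (g' x))"
  unfolding cu_def using aff_mult[of S L g "-1"] by auto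

lemma units_ok: "\<forall>v\<in>set V. aff S L v \<Longrightarrow> \<forall>u\<in>set (units V). \<exists>g. aff S L g \<and> (\<forall>x\<in>S. u x = relu3 (g x))"
proof (induction V rule: units.induct)
  case 1 then show ?case by simp
next
  case (2 a)
  then have a: "aff S L a" by simp
  show ?case using cu_ok[OF aff_add[OF a aff_const, of 1]] cu_ok[OF aff_diff[OF a aff_const, of 1]] cu_ok[OF a]
    by auto
next
  case (3 a b r)
  then have a: "aff S L a" and b: "aff S L b" and r: "\<forall>v\<in>set r. aff S L v" by auto
  have ab: "aff S L (\<lambda>x. a x + b x)" "aff S L (\<lambda>x. a x - b x)" using aff_add[OF a b] aff_diff[OF a b] by auto
  show ?case using cu_ok[OF aff_add[OF ab(1) aff_const, of 1]] cu_ok[OF aff_diff[OF ab(1) aff_const, of 1]]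
      cu_ok[OF aff_add[OF ab(2) aff_const, of 1]] cu_ok[OF aff_diff[OF ab(2) aff_const, of 1]] 3(1)[OF r]
    by auto
qed

lemma cu_mem: "set (cu g) \<subseteq> set U \<Longrightarrow> aff S U (\<lambda>x. relu3 (g x) - relu3 (- g x))"
  unfolding cu_def by (intro aff_diff aff_mem) auto

lemma pairprod_aff: "\<forall>w\<in>set (pairprod V). aff S (units V) w"
proof (induction V rule: pairprod.induct)
  case 1 then show ?case by simp
next
  case (2 a)
  let ?U = "units [a]"
  have "set (cu (\<lambda>x. a x + 1)) \<subseteq> set ?U" "set (cu (\<lambda>x. a x - 1)) \<subseteq> set ?U" "set (cu a) \<subseteq> set ?U"
    by auto
  note c = cu_mem[OF this(1)] cu_mem[OF this(2)] cu_mem[OF this(3)]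
  have "aff S ?U (\<lambda>x. (1/6) * (((relu3 (a x+1) - relu3 (-(a x+1))) + (relu3 (a x-1) - relu3 (-(a x-1))))
      - 2 * (relu3 (a x) - relu3 (- a x))))"
    by (rule aff_mult, rule aff_diff, rule aff_add, fact c(1), fact c(2), rule aff_mult, fact c(3))
  then show ?case by (simp only: lin_id[symmetric]) simp
next
  case (3 a b r)
  let ?U = "units (a # b # r)"
  have "set (cu (\<lambda>x. a x + b x + 1)) \<subseteq> set ?U" "set (cu (\<lambda>x. a x + b x - 1)) \<subseteq> set ?U"
    "set (cu (\<lambda>x. a x - b x + 1)) \<subseteq> set ?U" "set (cu (\<lambda>x. a x - b x - 1)) \<subseteq> set ?U"
    by auto
  note c = cu_mem[OF this(1)] cu_mem[OF this(2)] cu_mem[OF this(3)] cu_mem[OF this(4)]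
  have "aff S ?U (\<lambda>x. (1/24) * ((relu3 (a x+b x+1) - relu3 (-(a x+b x+1))) - (relu3 (a x+b x-1) - relu3 (-(a x+b x-1)))
   - (relu3 (a x-b x+1) - relu3 (-(a x-b x+1))) + (relu3 (a x-b x-1) - relu3 (-(a x-b x-1)))))"
    by (rule aff_mult, rule aff_add, rule aff_diff, rule aff_diff, fact c(1), fact c(2), fact c(3), fact c(4))
  then have h: "aff S ?U (\<lambda>x. a x * b x)" by (simp only: prod_id[symmetric])
  have "\<forall>w\<in>set (pairprod r). aff S ?U w"
    using 3 by (auto intro: aff_mono[rotated])
  then show ?case using h by simp
qed

lemma iterate:
  assumes "realizes W n S k L" "V \<noteq> []" "length V \<le> 2 ^ K" "6 * length V \<le> W" "\<forall>v\<in>set V. aff S L v"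
  shows "\<exists>L'. realizes W n S (k + K) L' \<and> aff S L' (\<lambda>x. prod_list (map (\<lambda>v. v x) V))"
  using assms
proof (induction K arbitrary: k L V)
  case 0
  then obtain v where "V = [v]" by (cases V) auto
  then show ?case using 0 by (intro exI[of _ L]) auto
next
  case (Suc K)
  have R: "realizes W n S (Suc k) (units V)"
    using realizes_step[OF Suc.prems(1) _ units_ok[OF Suc.prems(5)]] units_len[of V] Suc.prems(4) by linarith
  have "length (pairprod V) \<le> 2 ^ K" using Suc.prems(3) by (simp add: pairprod_len)
  moreover have "(length V + 1) div 2 \<le> length V" using Suc.prems(2) by (cases V) auto
  then have "6 * length (pairprod V) \<le> W" using Suc.prems(4) by (simp add: pairprod_len)
  ultimately obtain L' where "realizes W n S (Suc k + K) L'"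
    "aff S L' (\<lambda>x. prod_list (map (\<lambda>w. w x) (pairprod V)))"
    using Suc.IH[OF R pairprod_ne[OF Suc.prems(2)]] pairprod_aff by blast
  then show ?case by (intro exI[of _ L']) (simp add: pairprod_prod)
qed


fun dp :: "nat \<Rightarrow> real \<Rightarrow> real \<Rightarrow> real" where
  "dp 0 x t = (x - t) ^ 3"
| "dp (Suc 0) x t = - 3 * (x - t) ^ 2"
| "dp (Suc (Suc 0)) x t = 6 * (x - t)"
| "dp (Suc (Suc (Suc 0))) x t = - 6"
| "dp (Suc (Suc (Suc (Suc n)))) x t = 0"

lemma dp_ge4': "n \<ge> 4 \<Longrightarrow> dp n x t = 0"
  by (cases "(n, x, t)" rule: dp.cases) auto

lemma dp_ge4: "n \<ge> 4 \<Longrightarrow> dp n x = (\<lambda>t. 0)"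
  using dp_ge4' by auto

lemma deriv_c3: "deriv (\<lambda>t. (x - t) ^ 3) = (\<lambda>t::real. - 3 * (x - t) ^ 2)"
  by (rule ext, rule DERIV_imp_deriv) (auto intro!: derivative_eq_intros simp: power2_eq_square)

lemma deriv_c2: "deriv (\<lambda>t. - 3 * (x - t) ^ 2) = (\<lambda>t::real. 6 * (x - t))"
  by (rule ext, rule DERIV_imp_deriv) (auto intro!: derivative_eq_intros simp: power2_eq_square)

lemma deriv_c1: "deriv (\<lambda>t. 6 * (x - t)) = (\<lambda>t::real. - 6)"
  by (rule ext, rule DERIV_imp_deriv) (auto intro!: derivative_eq_intros)

lemma deriv_dp: "deriv (dp n x) = dp (Suc n) x"
proof -
  consider "n = 0" | "n = 1" | "n = 2" | "n = 3" | "n \<ge> 4" by linarith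
  then show ?thesis
  proof cases
    case 1
    have "dp n x = (\<lambda>t. (x - t) ^ 3)" "dp (Suc n) x = (\<lambda>t. - 3 * (x - t) ^ 2)"
      using 1 by (simp_all add: fun_eq_iff)
    then show ?thesis by (simp only: deriv_c3)
  next
    case 2
    have "dp n x = (\<lambda>t. - 3 * (x - t) ^ 2)" "dp (Suc n) x = (\<lambda>t. 6 * (x - t))"
      using 2 by (simp_all add: fun_eq_iff numeral_2_eq_2)
    then show ?thesis by (simp only: deriv_c2)
  next
    case 3
    have "dp n x = (\<lambda>t. 6 * (x - t))" "dp (Suc n) x = (\<lambda>t. - 6)"
      using 3 by (simp_all add: fun_eq_iff numeral_2_eq_2 numeral_3_eq_3)
    then show ?thesis by (simp only: deriv_c1)
  next
    case 4
    then have "dp n x = (\<lambda>t. - 6)" by (simp add: numeral_3_eq_3 fun_eq_iff)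
    then show ?thesis using 4 dp_ge4[of "Suc n" x] by simp
  next
    case 5 then show ?thesis using dp_ge4[of n x] dp_ge4[of "Suc n" x] by simp
  qed
qed

lemma goodfn_dp_pre: "n \<ge> 1 \<Longrightarrow> \<exists>b2 b1 b0. \<forall>x. dp n x 0 = b2 * x ^ 2 + b1 * x + b0"
proof -
  assume "n \<ge> 1"
  then consider "n = 1" | "n = 2" | "n = 3" | "n \<ge> 4" by linarith
  then show ?thesis
  proof cases
    case 1 then show ?thesis by (intro exI[of _ "-3"] exI[of _ 0]) simp
  next
    case 2 then show ?thesis by (intro exI[of _ 0] exI[of _ 6]) (simp add: numeral_2_eq_2)
  next
    case 3 then show ?thesis by (intro exI[of _ 0] exI[of _ "-6"]) (simp add: numeral_3_eq_3)
  next
    case 4 then show ?thesis using dp_ge4[of n] by (intro exI[of _ 0]) simp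
  qed
qed

lemma iter_dp: "(deriv ^^ n) (\<lambda>t. (x - t) ^ 3) = dp n x"
proof (induction n)
  case 0 show ?case by (simp add: fun_eq_iff)
next
  case (Suc n) then show ?case by (simp add: deriv_dp)
qed

lemma iter_zero: "(deriv ^^ n) (\<lambda>t::real. 0::real) = (\<lambda>t. 0)"
  by (induction n) auto

lemma deriv_local:
  assumes "open U" "\<forall>t\<in>U. f t = g t" "t \<in> U"
  shows "(deriv ^^ n) f t = (deriv ^^ n) (g :: real \<Rightarrow> real) t"
  using assms(3)
proof (induction n arbitrary: t)
  case 0 then show ?case using assms by simp
next
  case (Suc n)
  have "eventually (\<lambda>s. (deriv ^^ n) f s = (deriv ^^ n) g s) (nhds t)"
    unfolding eventually_nhds using assms(1) Suc by blast
  then show ?case by (simp add: deriv_cong_ev)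
qed

lemma knot_eq:
  assumes "l \<ge> 1" "j < j'" "knot l j = knot l j'"
  shows "knot l j = 0 \<or> knot l j = 1"
proof -
  have l: "real l > 0" using assms by simp
  { assume h: "0 < j" "j < int l"
    then have kj: "knot l j = real_of_int j / real l" by (simp add: knot_def)
    have "real_of_int j < real l" using h by linarith
    then have "knot l j < 1" using kj l by simp
    moreover have "knot l j' = 1 \<or> knot l j' = real_of_int j' / real l"
      using h assms(2) by (auto simp: knot_def)
    moreover have "real_of_int j / real l \<noteq> real_of_int j' / real l" using assms(2) l by (simp add: divide_cancel_right)
    ultimately have False using assms(3) kj by auto }
  moreover have "j \<le> 0 \<Longrightarrow> knot l j = 0" "int l \<le> j \<Longrightarrow> knot l j = 1"
    using l by (auto simp: knot_def)
  ultimately show ?thesis by (meson not_le)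
qed

definition goodfn :: "nat \<Rightarrow> int \<Rightarrow> (real \<Rightarrow> real) \<Rightarrow> bool" where
  "goodfn l i g \<longleftrightarrow> (\<exists>a b2 b1 b0. \<forall>x\<in>{0<..<1}.
     g x = (\<Sum>m<5. a m * relu3 (x - knot l (i + int m))) + b2 * x ^ 2 + b1 * x + b0)"

lemma goodfn_diff: "goodfn l i f \<Longrightarrow> goodfn l i g \<Longrightarrow> goodfn l i (\<lambda>x. (f x - g x) / c)"
  unfolding goodfn_def
proof (elim exE)
  fix a b2 b1 b0 a' b2' b1' b0'
  assume f: "\<forall>x\<in>{0<..<1}. f x = (\<Sum>m<5. a m * relu3 (x - knot l (i + int m))) + b2 * x ^ 2 + b1 * x + b0"
    and g: "\<forall>x\<in>{0<..<1}. g x = (\<Sum>m<5. a' m * relu3 (x - knot l (i + int m))) + b2' * x ^ 2 + b1' * x + b0'"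
  show "\<exists>a b2 b1 b0. \<forall>x\<in>{0<..<1}. (f x - g x) / c =
        (\<Sum>m<5. a m * relu3 (x - knot l (i + int m))) + b2 * x ^ 2 + b1 * x + b0"
    apply (rule exI[of _ "\<lambda>m. (a m - a' m) / c"], rule exI[of _ "(b2 - b2') / c"],
        rule exI[of _ "(b1 - b1') / c"], rule exI[of _ "(b0 - b0') / c"])
  proof
    fix x :: real assume x: "x \<in> {0<..<1}"
    define R where "R m = relu3 (x - knot l (i + int m))" for m
    have s: "(\<Sum>m<5. (a m - a' m) / c * R m) = ((\<Sum>m<5. a m * R m) - (\<Sum>m<5. a' m * R m)) / c"
      by (simp add: sum_divide_distrib sum_subtractf[symmetric] algebra_simps diff_divide_distrib)
    have key: "\<And>S1 S2 p1 p2. (S1 + p1 - (S2 + p2)) / c = (S1 - S2) / c + (p1 - p2) / c"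
      by (simp add: diff_divide_distrib add_divide_distrib)
    show "(f x - g x) / c = (\<Sum>m<5. (a m - a' m) / c * relu3 (x - knot l (i + int m))) +
        (b2 - b2') / c * x\<^sup>2 + (b1 - b1') / c * x + (b0 - b0') / c"
    proof -
      have fx: "f x = (\<Sum>m<5. a m * R m) + b2 * x\<^sup>2 + b1 * x + b0" using f x by (simp add: R_def)
      have gx: "g x = (\<Sum>m<5. a' m * R m) + b2' * x\<^sup>2 + b1' * x + b0'" using g x by (simp add: R_def)
      have "(f x - g x) / c = (\<Sum>m<5. (a m - a' m) / c * R m) +
        (b2 - b2') / c * x\<^sup>2 + (b1 - b1') / c * x + (b0 - b0') / c"
        unfolding fx gx s by (simp add: diff_divide_distrib add_divide_distrib algebra_simps)
      then show ?thesis by (simp add: R_def)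
    qed
  qed
qed

lemma goodfn_mult: "goodfn l i f \<Longrightarrow> goodfn l i (\<lambda>x. c * f x)"
  unfolding goodfn_def
proof (elim exE)
  fix a b2 b1 b0
  assume f: "\<forall>x\<in>{0<..<1}. f x = (\<Sum>m<5. a m * relu3 (x - knot l (i + int m))) + b2 * x ^ 2 + b1 * x + b0"
  show "\<exists>a b2 b1 b0. \<forall>x\<in>{0<..<1}. c * f x =
        (\<Sum>m<5. a m * relu3 (x - knot l (i + int m))) + b2 * x ^ 2 + b1 * x + b0"
    apply (rule exI[of _ "\<lambda>m. c * a m"], rule exI[of _ "c * b2"],
        rule exI[of _ "c * b1"], rule exI[of _ "c * b0"])
    using f by (auto simp: sum_distrib_left algebra_simps)
qed

lemma goodfn_poly: "goodfn l i (\<lambda>x. b2 * x ^ 2 + b1 * x + b0)"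
  unfolding goodfn_def by (rule exI[of _ "\<lambda>m. 0"]) auto

lemma goodfn_cong: "goodfn l i f \<Longrightarrow> (\<forall>x\<in>{0<..<1}. f x = g x) \<Longrightarrow> goodfn l i g"
  unfolding goodfn_def by auto

lemma goodfn_base:
  assumes "i \<le> j" "j \<le> i + 4"
  shows "goodfn l i (\<lambda>x. relu3 (x - knot l j))"
proof -
  define p where "p = nat (j - i)"
  have p: "p < 5" "j = i + int p" using assms by (auto simp: p_def)
  show ?thesis unfolding goodfn_def
    apply (rule exI[of _ "\<lambda>m. if m = p then 1 else 0"], rule exI[of _ 0], rule exI[of _ 0], rule exI[of _ 0])
  proof
    fix x :: real
    have "(\<Sum>m<5. (if m = p then 1 else 0) * relu3 (x - knot l (i + int m))) =
          (\<Sum>m<5. if m = p then relu3 (x - knot l (i + int m)) else 0)"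
      by (rule sum.cong) auto
    also have "\<dots> = relu3 (x - knot l j)" using p by simp
    finally show "relu3 (x - knot l j) = (\<Sum>m<5. (if m = p then 1 else 0) * relu3 (x - knot l (i + int m))) +
         0 * x\<^sup>2 + 0 * x + 0" by simp
  qed
qed

lemma ddiv_good:
  assumes l: "l \<ge> 1"
  shows "i \<le> j \<Longrightarrow> j + int k \<le> i + 4 \<Longrightarrow>
    goodfn l i (\<lambda>x. ddiv (\<lambda>t. (max (x - t) 0) ^ 3) (knot l) j k)"
proof (induction k arbitrary: j)
  case 0
  then show ?case using goodfn_base[of i j l] by (simp add: relu3_def)
next
  case (Suc k)
  show ?case
  proof (cases "knot l (j + int (Suc k)) = knot l j")
    case True
    then have kv: "knot l j = 0 \<or> knot l j = 1" using knot_eq[OF l, of j "j + int (Suc k)"] by simp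
    have "goodfn l i (\<lambda>x. (deriv ^^ Suc k) (\<lambda>t. (max (x - t) 0) ^ 3) (knot l j) / fact (Suc k))"
    proof (cases "knot l j = 0")
      case True
      have eq: "(deriv ^^ Suc k) (\<lambda>t. (max (x - t) 0) ^ 3) (knot l j) = dp (Suc k) x 0"
        if x: "x \<in> {0<..<1}" for x
      proof -
        have "(deriv ^^ Suc k) (\<lambda>t. (max (x - t) 0) ^ 3) 0 = (deriv ^^ Suc k) (\<lambda>t. (x - t) ^ 3) 0"
          by (rule deriv_local[of "{..<x}"]) (use x in auto)
        then show ?thesis using True by (simp del: funpow.simps add: iter_dp)
      qed
      obtain b2 b1 b0 where "\<forall>x. dp (Suc k) x 0 = b2 * x ^ 2 + b1 * x + b0"
        using goodfn_dp_pre[of "Suc k"] by auto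
      then have "goodfn l i (\<lambda>x. dp (Suc k) x 0 / fact (Suc k))"
        using goodfn_diff[OF goodfn_poly[of l i b2 b1 b0] goodfn_poly[of l i 0 0 0], of "fact (Suc k)"]
        by simp
      then show ?thesis using eq by (auto intro: goodfn_cong)
    next
      case False
      then have T: "knot l j = 1" using kv by simp
      have "(deriv ^^ Suc k) (\<lambda>t. (max (x - t) 0) ^ 3) (knot l j) = 0"
        if x: "x \<in> {0<..<1}" for x
      proof -
        have "(deriv ^^ Suc k) (\<lambda>t. (max (x - t) 0) ^ 3) 1 = (deriv ^^ Suc k) (\<lambda>t. 0) 1"
          by (rule deriv_local[of "{x<..}"]) (use x in auto)
        then show ?thesis using T by (simp add: iter_zero)
      qed
      then show ?thesis using goodfn_poly[of l i 0 0 0] by (auto intro: goodfn_cong)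
    qed
    then show ?thesis using True by (simp del: funpow.simps)
  next
    case False
    have g1: "goodfn l i (\<lambda>x. ddiv (\<lambda>t. (max (x - t) 0) ^ 3) (knot l) (j + 1) k)"
      using Suc.IH[of "j+1"] Suc.prems by simp
    have g2: "goodfn l i (\<lambda>x. ddiv (\<lambda>t. (max (x - t) 0) ^ 3) (knot l) j k)"
      using Suc.IH[of j] Suc.prems by simp
    show ?thesis using goodfn_diff[OF g1 g2, of "knot l (j + int (Suc k)) - knot l j"] False
      by (simp del: of_nat_Suc)
  qed
qed


lemma relu3_cont: "isCont relu3 x"
  unfolding relu3_def by (intro continuous_intros)

lemma bspline_formula:
  assumes l: "l \<ge> 1"
  shows "\<exists>a b2 b1 b0. \<forall>x\<in>{0..1}. bspline4 l i x =
     (\<Sum>m<5. a m * relu3 (x - knot l (i + int m))) + b2 * x ^ 2 + b1 * x + b0"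
proof -
  have "goodfn l i (\<lambda>x. (knot l (i + 4) - knot l i) * ddiv (\<lambda>t. (max (x - t) 0) ^ 3) (knot l) i 4)"
    by (rule goodfn_mult, rule ddiv_good[OF l]) auto
  then have "goodfn l i (bspline4_raw l i)" unfolding bspline4_raw_def .
  then obtain a b2 b1 b0 where ab: "\<forall>x\<in>{0<..<1}. bspline4_raw l i x =
     (\<Sum>m<5. a m * relu3 (x - knot l (i + int m))) + b2 * x ^ 2 + b1 * x + b0"
    unfolding goodfn_def by blast
  define G where "G x = (\<Sum>m<5. a m * relu3 (x - knot l (i + int m))) + b2 * x ^ 2 + b1 * x + b0" for x
  have cG: "isCont G x" for x
    unfolding G_def relu3_def by (intro continuous_intros)
  have "bspline4 l i x = G x" if x: "x \<in> {0..1}" for x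
  proof (cases "0 < x \<and> x < 1")
    case True then show ?thesis using ab by (simp add: bspline4_def G_def)
  next
    case False
    then have x01: "x = 0 \<or> x = 1" using x by auto
    have lp: "x islimpt {0<..<1::real}"
      using x01 islimpt_greaterThanLessThan1[of "0::real" 1] islimpt_greaterThanLessThan2[of "0::real" 1] by auto
    have "(G \<longlongrightarrow> G x) (at x within {0<..<1})"
      using cG[of x] continuous_at_imp_continuous_within continuous_within by blast
    moreover have "eventually (\<lambda>y. bspline4_raw l i y = G y) (at x within {0<..<1})"
      unfolding eventually_at_filter using ab by (simp add: G_def)
    ultimately have "(bspline4_raw l i \<longlongrightarrow> G x) (at x within {0<..<1})"
      using tendsto_cong by blast
    then have "Lim (at x within {0<..<1}) (bspline4_raw l i) = G x"
      using lp by (intro tendsto_Lim) (auto simp: trivial_limit_within)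
    then show ?thesis using False unfolding bspline4_def by presburger
  qed
  then show ?thesis unfolding G_def by blast
qed


lemma log_bound: assumes "d \<ge> (1::nat)" shows "d \<le> 2 ^ nat \<lceil>log 2 (real d)\<rceil>"
proof -
  have ge: "log 2 (real d) \<ge> 0" using assms by simp
  have "real d = 2 powr log 2 (real d)" using assms by simp
  also have "\<dots> \<le> 2 powr real_of_int \<lceil>log 2 (real d)\<rceil>" by (intro powr_mono) auto
  also have "real_of_int \<lceil>log 2 (real d)\<rceil> = real (nat \<lceil>log 2 (real d)\<rceil>)" using ge by simp
  also have "2 powr real (nat \<lceil>log 2 (real d)\<rceil>) = 2 ^ nat \<lceil>log 2 (real d)\<rceil>" by (simp add: powr_realpow)
  finally have "real d \<le> real (2 ^ nat \<lceil>log 2 (real d)\<rceil>)" by simp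
  then show ?thesis by linarith
qed

lemma prod_upt: "prod_list (map f [0..<d]) = (\<Prod>j<d. f j :: real)"
  by (induction d) (auto simp: lessThan_Suc mult.commute)

lemma length_concat_map: "length (concat (map f xs)) = sum_list (map (\<lambda>x. length (f x)) xs)"
  by (induction xs) auto

definition uni :: "nat \<Rightarrow> int list \<Rightarrow> nat \<Rightarrow> (real list \<Rightarrow> real) list" where
  "uni l is j = [\<lambda>x. relu3 (x ! j), \<lambda>x. relu3 (x ! j + 1), \<lambda>x. relu3 (x ! j + 2), \<lambda>x. relu3 (x ! j + 3)]
     @ map (\<lambda>m x. relu3 (x ! j - knot l (is ! j + int m))) [0..<5]"

theorem partb:
  assumes d: "d \<ge> 1" and l: "l \<ge> 1" and len: "length is = d"
  shows "implements_on {relu3} (nat \<lceil>log 2 (real d)\<rceil> + 2) (11 * d) d (unit_cube d) (bspline4_multi l is)"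
proof -
  define S where "S = unit_cube d"
  define W where "W = 11 * d"
  define L0 where "L0 = map (\<lambda>j x. x ! j :: real) [0..<d]"
  define U1 where "U1 = concat (map (uni l is) [0..<d])"
  define K where "K = nat \<lceil>log 2 (real d)\<rceil>"
  have R0: "realizes W d S 0 L0" unfolding S_def L0_def by (rule realizes_base)
  have lenU1: "length U1 \<le> W" unfolding U1_def W_def by (simp add: length_concat_map uni_def sum_list_triv)
  have U1ok: "\<forall>u\<in>set U1. \<exists>g. aff S L0 g \<and> (\<forall>x\<in>S. u x = relu3 (g x))"
  proof
    fix u assume "u \<in> set U1"
    then obtain j where j: "j < d" "u \<in> set (uni l is j)" unfolding U1_def by auto
    have xj: "aff S L0 (\<lambda>x. x ! j)" using j by (intro aff_mem) (auto simp: L0_def)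
    have "\<exists>c. u = (\<lambda>x. relu3 (x ! j + c))"
      using j(2) unfolding uni_def
      by (auto intro: exI[of _ 0] exI[of _ 1] exI[of _ 2] exI[of _ 3] exI[of _ "- knot l (is ! j + int m)" for m])
    then obtain c where "u = (\<lambda>x. relu3 (x ! j + c))" by blast
    then show "\<exists>g. aff S L0 g \<and> (\<forall>x\<in>S. u x = relu3 (g x))"
      using aff_add[OF xj aff_const, of c] by auto
  qed
  have R1: "realizes W d S (Suc 0) U1" by (rule realizes_step[OF R0 lenU1 U1ok])
  define V where "V = map (\<lambda>j x. bspline4 l (is ! j) (x ! j)) [0..<d]"
  have Vaff: "\<forall>v\<in>set V. aff S U1 v"
  proof
    fix v assume "v \<in> set V"
    then obtain j where j: "j < d" and v: "v = (\<lambda>x. bspline4 l (is ! j) (x ! j))" unfolding V_def by auto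
    obtain a b2 b1 b0 where ab: "\<forall>y\<in>{0..1}. bspline4 l (is ! j) y =
     (\<Sum>m<5. a m * relu3 (y - knot l (is ! j + int m))) + b2 * y ^ 2 + b1 * y + b0"
      using bspline_formula[OF l] by blast
    have sub: "set (uni l is j) \<subseteq> set U1" using j unfolding U1_def by auto
    have m: "aff S U1 u" if "u \<in> set (uni l is j)" for u using that sub by (intro aff_mem) auto
    have m0: "aff S U1 (\<lambda>x. relu3 (x ! j))" and m1: "aff S U1 (\<lambda>x. relu3 (x ! j + 1))"
      and m2: "aff S U1 (\<lambda>x. relu3 (x ! j + 2))" and m3: "aff S U1 (\<lambda>x. relu3 (x ! j + 3))"
      by (auto intro!: m simp: uni_def)
    have mk: "aff S U1 (\<lambda>x. relu3 (x ! j - knot l (is ! j + int k)))" if "k < 5" for k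
      using that by (intro m) (auto simp: uni_def)
    have "aff S U1 (\<lambda>x. (\<Sum>k<5. a k * relu3 (x ! j - knot l (is ! j + int k)))
       + b2 * (- (1/6) * (relu3 (x ! j + 2) - 4 * relu3 (x ! j + 1) + 3 * relu3 (x ! j) - 4))
       + b1 * (- (1/12) * (relu3 (x ! j + 3) - 5 * relu3 (x ! j + 2) + 7 * relu3 (x ! j + 1)
                            - 3 * relu3 (x ! j) + 6)) + b0)"
      by (intro aff_add aff_diff aff_mult aff_const aff_sum ballI m0 m1 m2 m3 mk) auto
    moreover have "\<forall>x\<in>S. (\<Sum>k<5. a k * relu3 (x ! j - knot l (is ! j + int k)))
       + b2 * (- (1/6) * (relu3 (x ! j + 2) - 4 * relu3 (x ! j + 1) + 3 * relu3 (x ! j) - 4))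
       + b1 * (- (1/12) * (relu3 (x ! j + 3) - 5 * relu3 (x ! j + 2) + 7 * relu3 (x ! j + 1)
                            - 3 * relu3 (x ! j) + 6)) + b0 = v x"
    proof
      fix x assume "x \<in> S"
      then have x: "0 \<le> x ! j" "x ! j \<le> 1" using j by (auto simp: S_def unit_cube_def)
      show "(\<Sum>k<5. a k * relu3 (x ! j - knot l (is ! j + int k)))
       + b2 * (- (1/6) * (relu3 (x ! j + 2) - 4 * relu3 (x ! j + 1) + 3 * relu3 (x ! j) - 4))
       + b1 * (- (1/12) * (relu3 (x ! j + 3) - 5 * relu3 (x ! j + 2) + 7 * relu3 (x ! j + 1)
                            - 3 * relu3 (x ! j) + 6)) + b0 = v x"
        unfolding v using ab x id_sq[OF x(1)] id_lin[OF x(1)] by simp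
    qed
    ultimately show "aff S U1 v" by (rule aff_cong)
  qed
  obtain L' where L': "realizes W d S (Suc 0 + K) L'" "aff S L' (\<lambda>x. prod_list (map (\<lambda>v. v x) V))"
    using iterate[OF R1, of V K] Vaff d log_bound[OF d]
    by (auto simp: V_def W_def K_def)
  have "aff S L' (bspline4_multi l is)"
    using L'(2) by (rule aff_cong) (auto simp: V_def o_def prod_upt bspline4_multi_def len)
  from realizes_final[OF L'(1) this] d
  have "implements_on {relu3} (Suc (Suc 0 + K)) W d S (bspline4_multi l is)" by (simp add: W_def)
  moreover have "Suc (Suc 0 + K) = nat \<lceil>log 2 (real d)\<rceil> + 2" by (simp add: K_def)
  ultimately show ?thesis by (simp add: S_def W_def)
qed

theorem mainTheorem8:
  shows "(\<forall>x::real. x \<ge> 0 \<longrightarrow>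
            x ^ 2 = - (1/6) * (relu3 (x + 2) - 4 * relu3 (x + 1) + 3 * relu3 x - 4))
       \<and> (\<forall>x::real. x \<ge> 0 \<longrightarrow>
            x = - (1/12) * (relu3 (x + 3) - 5 * relu3 (x + 2) + 7 * relu3 (x + 1)
                            - 3 * relu3 x + 6))
       \<and> (\<forall>x y::real. x \<ge> 0 \<longrightarrow> y \<ge> 0 \<longrightarrow>
            x * y = - (1/12) * (relu3 (x + y + 2) - 4 * relu3 (x + y + 1) + 3 * relu3 (x + y)
                                - relu3 (x + 2) + 4 * relu3 (x + 1) - 3 * relu3 x
                                - relu3 (y + 2) + 4 * relu3 (y + 1) - 3 * relu3 y + 4))
       \<and> (\<forall>(d::nat) (l::nat) (is::int list).
            d \<ge> 1 \<longrightarrow> l \<ge> 1 \<longrightarrow> length is = d \<longrightarrow> set is \<subseteq> bspline_index l \<longrightarrow>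
            implements_on {relu3} (nat \<lceil>log 2 (real d)\<rceil> + 2) (11 * d) d (unit_cube d)
              (bspline4_multi l is))"
  using id_sq id_lin id_prod partb by blast

end
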